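(* Let $\Lambda$ be a lattice of $\mathbf R^l$, $\Omega\in\mathbf R^l$, $R>0$, and assume $\Lambda^*_R\ne\emptyset$. Let $p\in\Lambda^*_R$ be such that $p\cdot\Omega=\alpha:=\alpha(\Lambda,\Omega,R)$, and assume $\alpha>0$. Let $E=\{p\}^\perp$. Then $\Lambda_0:=\Lambda\cap E$ is a lattice of $E$. Moreover, setting $(\Lambda_0)^*=\{q\in E:\ q\cdot x\in\mathbf Z\ \forall x\in\Lambda_0\}$, $(\Lambda_0)^*_{\sqrt3R/2}=\{q\in(\Lambda_0)^*:\ 0<|q|\le\sqrt3R/2\}$ and $\beta=\inf\{|q\cdot\Omega|:\ q\in(\Lambda_0)^*_{\sqrt3R/2}\}$: (i) $\dfrac{\alpha}{\beta|p|}\le\dfrac2R$; in particular $\alpha\le2\beta$; (ii) $\alpha(\Lambda,\Omega,\sqrt7R/2)\le\beta$.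
   Context: A lattice of $\mathbf R^l$ is a discrete subgroup $\Lambda$ with $\mathbf R^l/\Lambda$ of finite volume. $\Lambda^*=\{p\in\mathbf R^l:\ p\cdot\lambda\in\mathbf Z\ \forall\lambda\in\Lambda\}$, $\Lambda^*_R=\{p\in\Lambda^*:\ 0<|p|\le R\}$ with $|\cdot|$ Euclidean, $\alpha(\Lambda,\Omega,R)=\inf\{|p\cdot\Omega|:\ p\in\Lambda^*_R\}$, and $\inf\emptyset=+\infty$. *)

theory Defs
  imports "HOL-Analysis.Analysis" "HOL-Library.Extended_Real"
begin

text \<open>A lattice of a linear subspace V of a Euclidean space: a discrete additive
subgroup L of V such that V/L is compact (equivalently, for a discrete subgroup,
of finite volume).\<close>
definition lattice_of :: "'a::euclidean_space set \<Rightarrow> 'a set \<Rightarrow> bool" where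
  "lattice_of V L \<longleftrightarrow>
     subspace V \<and> L \<subseteq> V \<and> 0 \<in> L \<and>
     (\<forall>x\<in>L. \<forall>y\<in>L. x + y \<in> L \<and> - x \<in> L) \<and>
     (\<exists>e>0. \<forall>x\<in>L. x \<noteq> 0 \<longrightarrow> e \<le> norm x) \<and>
     (\<exists>K. compact K \<and> K \<subseteq> V \<and> V \<subseteq> (\<Union>l\<in>L. (\<lambda>k. l + k) ` K))"

definition dual_lattice :: "'a::euclidean_space set \<Rightarrow> 'a set" where
  "dual_lattice L = {p. \<forall>l\<in>L. p \<bullet> l \<in> \<int>}"

definition dual_R :: "'a::euclidean_space set \<Rightarrow> real \<Rightarrow> 'a set" where
  "dual_R L R = {p \<in> dual_lattice L. 0 < norm p \<and> norm p \<le> R}"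

text \<open>alpha(L, Omega, R) = inf { |p . Omega| : p in L*_R }, with inf of the empty set = +infinity.\<close>
definition alpha :: "'a::euclidean_space set \<Rightarrow> 'a \<Rightarrow> real \<Rightarrow> ereal" where
  "alpha L \<Omega> R = (INF p\<in>dual_R L R. ereal \<bar>p \<bullet> \<Omega>\<bar>)"

end

theory Submission
  imports Defs
begin


lemma lat_intmult:
  fixes x :: "'a::real_vector"
  assumes h0: "0 \<in> L" and hadd: "\<forall>x\<in>L. \<forall>y\<in>L. x + y \<in> L \<and> - x \<in> L" and hx: "x \<in> L"
  shows "of_int m *\<^sub>R x \<in> L"
proof -
  have nat: "of_nat k *\<^sub>R x \<in> L" for k
  proof (induction k)
    case 0 then show ?case using h0 by simp
  next
    case (Suc k)
    have "of_nat (Suc k) *\<^sub>R x = x + of_nat k *\<^sub>R x" by (simp add: algebra_simps)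
    moreover have "x + of_nat k *\<^sub>R x \<in> L" using Suc hadd hx by blast
    ultimately show ?case by simp
  qed
  show ?thesis
  proof (cases "m \<ge> 0")
    case True
    then obtain k where "m = int k" using nonneg_eq_int by blast
    then show ?thesis using nat[of k] by simp
  next
    case False
    obtain k where "m = - int k" using False by (intro that[of "nat (-m)"]) simp
    then have "of_int m *\<^sub>R x = - (of_nat k *\<^sub>R x)" by simp
    moreover have "- (of_nat k *\<^sub>R x) \<in> L" using nat[of k] hadd by blast
    ultimately show ?thesis by simp
  qed
qed

lemma exists_gen:
  fixes L :: "'a::euclidean_space set" and p :: 'a
  assumes h0: "0 \<in> L" and hadd: "\<forall>x\<in>L. \<forall>y\<in>L. x + y \<in> L \<and> - x \<in> L"
    and hZ: "\<forall>l\<in>L. p \<bullet> l \<in> \<int>"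
    and hx0: "x0 \<in> L" "p \<bullet> x0 \<noteq> 0"
  shows "\<exists>n::nat. \<exists>x1\<in>L. n > 0 \<and> p \<bullet> x1 = real n \<and> (\<forall>x\<in>L. \<exists>m::int. p \<bullet> x = of_int m * real n)"
proof -
  define A where "A = {m::nat. m > 0 \<and> (\<exists>x\<in>L. p \<bullet> x = real m)}"
  obtain z where z: "p \<bullet> x0 = of_int z" using hZ hx0 Ints_cases by metis
  have "z \<noteq> 0" using z hx0 by auto
  have "nat \<bar>z\<bar> \<in> A"
  proof (cases "z > 0")
    case True
    then have "p \<bullet> x0 = real (nat \<bar>z\<bar>)" using z by simp
    then show ?thesis unfolding A_def using hx0 \<open>z \<noteq> 0\<close> by (auto intro!: bexI[of _ x0])
  next
    case False
    have "-x0 \<in> L" using hadd hx0 by blast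
    moreover have "p \<bullet> (-x0) = real (nat \<bar>z\<bar>)" using z False by simp
    ultimately show ?thesis unfolding A_def using \<open>z \<noteq> 0\<close> by (auto intro!: bexI[of _ "-x0"])
  qed
  define n where "n = Least (\<lambda>m. m \<in> A)"
  have nA: "n \<in> A" unfolding n_def by (rule LeastI) fact
  have nmin: "\<And>m. m \<in> A \<Longrightarrow> n \<le> m" unfolding n_def by (rule Least_le)
  obtain x1 where x1: "x1 \<in> L" "p \<bullet> x1 = real n" "n > 0" using nA unfolding A_def by auto
  have "\<exists>m::int. p \<bullet> x = of_int m * real n" if hx: "x \<in> L" for x
  proof -
    obtain w where w: "p \<bullet> x = of_int w" using hZ hx Ints_cases by metis
    define m where "m = w div int n"
    define r where "r = w mod int n"
    have wr: "w = m * int n + r" unfolding m_def r_def by simp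
    have r0: "0 \<le> r" "r < int n" unfolding r_def using x1 by auto
    have "- (of_int m *\<^sub>R x1) \<in> L" using lat_intmult[OF h0 hadd x1(1)] hadd by blast
    then have y: "x + - (of_int m *\<^sub>R x1) \<in> L" using hadd hx by blast
    have py: "p \<bullet> (x + - (of_int m *\<^sub>R x1)) = of_int r"
      using w x1 wr by (simp add: inner_add_right algebra_simps)
    have "r = 0"
    proof (rule ccontr)
      assume "r \<noteq> 0"
      then have "nat r \<in> A" unfolding A_def using r0 py y by (auto intro!: bexI[of _ "x + - (of_int m *\<^sub>R x1)"])
      then have "n \<le> nat r" by (rule nmin)
      then show False using r0 by linarith
    qed
    then show ?thesis using w wr by (intro exI[of _ m]) simp
  qed
  then show ?thesis using x1 by (intro exI[of _ n] bexI[of _ x1] conjI) auto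
qed

lemma arith1: "(x::real) = a + b \<Longrightarrow> a \<le> 3*R^2/4 \<Longrightarrow> b \<le> c \<Longrightarrow> c = R^2/4 \<Longrightarrow> x \<le> R^2" by simp
lemma arith2: "(x::real) = a + b \<Longrightarrow> a \<le> 3*R^2/4 \<Longrightarrow> b \<le> 1 * c \<Longrightarrow> c \<le> R^2 \<Longrightarrow> x \<le> (sqrt 7 * R / 2)^2"
  by (simp add: power_mult_distrib power_divide)



theorem lemma8p2:
  fixes L :: "'a::euclidean_space set" and \<Omega> p :: 'a and R :: real
  assumes "lattice_of UNIV L"
    and "R > 0"
    and "dual_R L R \<noteq> {}"
    and "p \<in> dual_R L R"
    and "ereal (p \<bullet> \<Omega>) = alpha L \<Omega> R"
    and "alpha L \<Omega> R > 0"
  shows "lattice_of {x. p \<bullet> x = 0} (L \<inter> {x. p \<bullet> x = 0})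
    \<and> (let E = {x. p \<bullet> x = 0}; L0 = L \<inter> E;
           \<beta> = (INF q\<in>{q\<in>E. (\<forall>x\<in>L0. q \<bullet> x \<in> \<int>) \<and> 0 < norm q \<and> norm q \<le> sqrt 3 * R / 2}.
                  ereal \<bar>q \<bullet> \<Omega>\<bar>)
       in alpha L \<Omega> R / (\<beta> * ereal (norm p)) \<le> ereal (2 / R)
          \<and> alpha L \<Omega> R \<le> 2 * \<beta>
          \<and> alpha L \<Omega> (sqrt 7 * R / 2) \<le> \<beta>)"
proof -
  have h0: "0 \<in> L" and hadd: "\<forall>x\<in>L. \<forall>y\<in>L. x + y \<in> L \<and> - x \<in> L"
    and disc: "\<exists>e>0. \<forall>x\<in>L. x \<noteq> 0 \<longrightarrow> e \<le> norm x"
    and cov: "\<exists>K. compact K \<and> UNIV \<subseteq> (\<Union>l\<in>L. (\<lambda>k. l + k) ` K)"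
    using assms(1) unfolding lattice_of_def by auto
  obtain K where K1: "compact K" and Kc: "UNIV \<subseteq> (\<Union>l\<in>L. (\<lambda>k. l + k) ` K)" using cov by blast
  have K2: "\<exists>l\<in>L. \<exists>k\<in>K. v = l + k" for v
  proof -
    have "v \<in> (\<Union>l\<in>L. (\<lambda>k. l + k) ` K)" using Kc by blast
    then show ?thesis by blast
  qed
  obtain B where B: "\<forall>k\<in>K. norm k \<le> B" using compact_imp_bounded[OF K1] bounded_iff by blast
  have pZ: "\<forall>l\<in>L. p \<bullet> l \<in> \<int>" and pn: "0 < norm p" "norm p \<le> R"
    using assms(4) unfolding dual_R_def dual_lattice_def by auto
  have pk: "\<bar>p \<bullet> k\<bar> \<le> norm p * B" if "k \<in> K" for k
  proof -
    have "\<bar>p \<bullet> k\<bar> \<le> norm p * norm k" by (rule Cauchy_Schwarz_ineq2)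
    also have "\<dots> \<le> norm p * B" using B that pn by (simp add: mult_left_mono)
    finally show ?thesis .
  qed
  have "\<exists>x0\<in>L. p \<bullet> x0 \<noteq> 0"
  proof (rule ccontr)
    assume "\<not> ?thesis"
    then have all0: "\<forall>x\<in>L. p \<bullet> x = 0" by auto
    define t where "t = (norm p * B + 1) / (norm p)\<^sup>2"
    obtain l k where lk: "l \<in> L" "k \<in> K" "t *\<^sub>R p = l + k" using K2 by blast
    have "p \<bullet> (t *\<^sub>R p) = norm p * B + 1" unfolding t_def using pn by (simp add: dot_square_norm)
    moreover have "p \<bullet> (t *\<^sub>R p) = p \<bullet> k" using lk all0 by (simp add: inner_add_right inner_diff_right)
    ultimately show False using pk[OF lk(2)] by linarith
  qed
  then obtain x0 where x0: "x0 \<in> L" "p \<bullet> x0 \<noteq> 0" by blast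
  obtain n x1 where n: "n > 0" "x1 \<in> L" "p \<bullet> x1 = real n"
    and hdiv: "\<forall>x\<in>L. \<exists>m::int. p \<bullet> x = of_int m * real n"
  proof -
    from exists_gen[OF h0 hadd pZ x0] obtain n where
      "\<exists>x1\<in>L. n > 0 \<and> p \<bullet> x1 = real n \<and> (\<forall>x\<in>L. \<exists>m::int. p \<bullet> x = of_int m * real n)"
      by (elim exE)
    then obtain x1 where "x1 \<in> L" "n > 0 \<and> p \<bullet> x1 = real n \<and> (\<forall>x\<in>L. \<exists>m::int. p \<bullet> x = of_int m * real n)"
      by (elim bexE)
    then show ?thesis using that by (elim conjE) 
  qed
  have red: "\<exists>m::int. l + - (of_int m *\<^sub>R x1) \<in> L \<and> p \<bullet> (l + - (of_int m *\<^sub>R x1)) = 0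
      \<and> p \<bullet> l = of_int m * real n" if hl: "l \<in> L" for l
  proof -
    obtain m where m: "p \<bullet> l = of_int m * real n" using bspec[OF hdiv hl] by (elim exE)
    have "- (of_int m *\<^sub>R x1) \<in> L" using lat_intmult[OF h0 hadd n(2)] hadd by blast
    then have "l + - (of_int m *\<^sub>R x1) \<in> L" using hadd that by blast
    moreover have "p \<bullet> (l + - (of_int m *\<^sub>R x1)) = 0" using m n by (simp add: inner_add_right inner_diff_right)
    ultimately show ?thesis using m by (intro exI[of _ m] conjI)
  qed
  have lat: "lattice_of {x. p \<bullet> x = 0} (L \<inter> {x. p \<bullet> x = 0})"
    unfolding lattice_of_def
  proof (intro conjI)
    show "subspace {x. p \<bullet> x = 0}" by (rule subspace_hyperplane)
    show "L \<inter> {x. p \<bullet> x = 0} \<subseteq> {x. p \<bullet> x = 0}" by blast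
    show "0 \<in> L \<inter> {x. p \<bullet> x = 0}" using h0 by simp
    show "\<forall>x\<in>L \<inter> {x. p \<bullet> x = 0}. \<forall>y\<in>L \<inter> {x. p \<bullet> x = 0}.
        x + y \<in> L \<inter> {x. p \<bullet> x = 0} \<and> - x \<in> L \<inter> {x. p \<bullet> x = 0}"
      using hadd by (auto simp add: inner_add_right)
    show "\<exists>e>0. \<forall>x\<in>L \<inter> {x. p \<bullet> x = 0}. x \<noteq> 0 \<longrightarrow> e \<le> norm x" using disc by blast
    define B' where "B' = norm p * B"
    define K' where "K' = {x. p \<bullet> x = 0} \<inter> (\<lambda>z. fst z *\<^sub>R x1 + snd z) ` ({-B'..B'} \<times> K)"
    show "\<exists>K. compact K \<and> K \<subseteq> {x. p \<bullet> x = 0} \<and>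
        {x. p \<bullet> x = 0} \<subseteq> (\<Union>l\<in>L \<inter> {x. p \<bullet> x = 0}. (\<lambda>k. l + k) ` K)"
    proof (intro exI[of _ K'] conjI)
      have "compact ((\<lambda>z. fst z *\<^sub>R x1 + snd z) ` ({-B'..B'} \<times> K))"
        by (rule compact_continuous_image[OF _ compact_Times[OF compact_Icc K1]])
          (intro continuous_intros)
      then show "compact K'" unfolding K'_def by (intro closed_Int_compact closed_hyperplane)
      show "K' \<subseteq> {x. p \<bullet> x = 0}" unfolding K'_def by blast
      show "{x. p \<bullet> x = 0} \<subseteq> (\<Union>l\<in>L \<inter> {x. p \<bullet> x = 0}. (\<lambda>k. l + k) ` K')"
      proof
        fix v assume v: "v \<in> {x. p \<bullet> x = 0}"
        obtain l k where lk: "l \<in> L" "k \<in> K" "v = l + k" using K2 by blast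
        obtain m where m: "l + - (of_int m *\<^sub>R x1) \<in> L" "p \<bullet> (l + - (of_int m *\<^sub>R x1)) = 0"
          "p \<bullet> l = of_int m * real n" using red[OF lk(1)] by (elim exE conjE)
        define y where "y = l + - (of_int m *\<^sub>R x1)"
        have vy: "v = y + (of_int m *\<^sub>R x1 + k)" unfolding y_def lk by simp
        have pw: "p \<bullet> (of_int m *\<^sub>R x1 + k) = 0"
          using v lk m(3) n by (simp add: inner_add_right inner_diff_right)
        have "p \<bullet> k = - (real_of_int m * real n)" using pw m(3) n
          by (simp add: inner_add_right)
        then have "\<bar>real_of_int m\<bar> * real n = \<bar>p \<bullet> k\<bar>" by (simp add: abs_mult)
        also have "\<dots> \<le> B'" unfolding B'_def using pk[OF lk(2)] .
        finally have mb: "\<bar>real_of_int m\<bar> * real n \<le> B'" .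
        have "\<bar>real_of_int m\<bar> \<le> \<bar>real_of_int m\<bar> * real n" using n(1)
          by (simp add: mult_le_cancel_left1)
        then have "\<bar>real_of_int m\<bar> \<le> B'" using mb by linarith
        then have "(real_of_int m, k) \<in> {-B'..B'} \<times> K" using lk(2) by auto
        then have "of_int m *\<^sub>R x1 + k \<in> K'" unfolding K'_def using pw
          by (auto intro!: image_eqI[of _ _ "(real_of_int m, k)"])
        moreover have "y \<in> L \<inter> {x. p \<bullet> x = 0}" using m unfolding y_def by simp
        ultimately show "v \<in> (\<Union>l\<in>L \<inter> {x. p \<bullet> x = 0}. (\<lambda>k. l + k) ` K')"
          using vy by blast
      qed
    qed
  qed
  define a where "a = p \<bullet> \<Omega>"
  have aeq: "alpha L \<Omega> R = ereal a" using assms(5) unfolding a_def by simp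
  have apos: "a > 0" using assms(6) aeq by simp
  have alow: "a \<le> \<bar>p' \<bullet> \<Omega>\<bar>" if "p' \<in> dual_R L R" for p'
  proof -
    have "alpha L \<Omega> R \<le> ereal \<bar>p' \<bullet> \<Omega>\<bar>" unfolding alpha_def using that by (rule INF_lower)
    then show ?thesis using aeq by simp
  qed
  define s0 where "s0 = (\<lambda>q. - (q \<bullet> x1) / real n)"
  have shift: "q + (s0 q + of_int j) *\<^sub>R p \<in> dual_lattice L"
    if q1: "p \<bullet> q = 0" and q2: "\<forall>x\<in>L \<inter> {x. p \<bullet> x = 0}. q \<bullet> x \<in> \<int>" for q j
    unfolding dual_lattice_def
  proof (intro CollectI ballI)
    fix l assume hl: "l \<in> L"
    obtain m where m: "l + - (of_int m *\<^sub>R x1) \<in> L" "p \<bullet> (l + - (of_int m *\<^sub>R x1)) = 0"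
      "p \<bullet> l = of_int m * real n" using red[OF hl] by (elim exE conjE)
    have qy: "q \<bullet> (l + - (of_int m *\<^sub>R x1)) \<in> \<int>" using q2 m(1,2) by blast
    have "(q + (s0 q + of_int j) *\<^sub>R p) \<bullet> l
        = q \<bullet> (l + - (of_int m *\<^sub>R x1)) + of_int (j * m * int n)"
      using m(3) n(1) unfolding s0_def
      by (simp add: inner_add_left inner_add_right inner_diff_right algebra_simps)
    then show "(q + (s0 q + of_int j) *\<^sub>R p) \<bullet> l \<in> \<int>" using qy by simp
  qed
  have normq: "(norm (q + s *\<^sub>R p))\<^sup>2 = (norm q)\<^sup>2 + s\<^sup>2 * (norm p)\<^sup>2" if "p \<bullet> q = 0" for q s
  proof -
    have "orthogonal q (s *\<^sub>R p)" unfolding orthogonal_def using that by (simp add: inner_commute)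
    then have "(norm (q + s *\<^sub>R p))\<^sup>2 = (norm q)\<^sup>2 + (norm (s *\<^sub>R p))\<^sup>2" by (rule norm_add_Pythagorean)
    then show ?thesis by (simp add: power_mult_distrib)
  qed
  define T where "T = R / (2 * norm p)"
  have T1: "T \<ge> 1/2" unfolding T_def using pn by (simp add: field_simps)
  have T2: "T\<^sup>2 * (norm p)\<^sup>2 = R\<^sup>2 / 4" unfolding T_def using pn by (simp add: field_simps power2_eq_square)
  define Q where "Q = {q\<in>{x. p \<bullet> x = 0}. (\<forall>x\<in>L \<inter> {x. p \<bullet> x = 0}. q \<bullet> x \<in> \<int>) \<and> 0 < norm q \<and> norm q \<le> sqrt 3 * R / 2}"
  have Qn: "(norm q)\<^sup>2 \<le> 3 * R\<^sup>2 / 4" if "q \<in> Q" for q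
  proof -
    have "norm q \<le> sqrt 3 * R / 2" "0 \<le> norm q" using that unfolding Q_def by auto
    then have "(norm q)\<^sup>2 \<le> (sqrt 3 * R / 2)\<^sup>2" by (rule power_mono)
    then show ?thesis by (simp add: power_mult_distrib power_divide)
  qed
  have pnz: "0 < norm (q + s *\<^sub>R p)" if "q \<in> Q" for q s
  proof -
    have "0 < norm q" "p \<bullet> q = 0" using that unfolding Q_def by auto
    then have "0 < (norm (q + s *\<^sub>R p))\<^sup>2" using normq[of q s] by (simp add: add_pos_nonneg)
    then show ?thesis by simp
  qed
  have keyA: "a * T \<le> \<bar>q \<bullet> \<Omega>\<bar>" if hq: "q \<in> Q" for q
  proof (rule ccontr)
    assume "\<not> ?thesis"
    then have lt: "\<bar>q \<bullet> \<Omega>\<bar> < a * T" by simp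
    have q1: "p \<bullet> q = 0" and q2: "\<forall>x\<in>L \<inter> {x. p \<bullet> x = 0}. q \<bullet> x \<in> \<int>" using hq unfolding Q_def by auto
    define u where "u = - (q \<bullet> \<Omega>) / a"
    have au: "q \<bullet> \<Omega> = - a * u" unfolding u_def using apos by simp
    have uT: "\<bar>u\<bar> < T" using lt apos unfolding u_def by (simp add: abs_div field_simps)
    obtain j :: int where sj: "\<bar>s0 q + of_int j\<bar> \<le> T" "\<bar>s0 q + of_int j - u\<bar> < 1"
    proof -
      define c where "c = \<lceil>u - s0 q\<rceil>"
      have c1: "u \<le> s0 q + of_int c" "s0 q + of_int c < u + 1" unfolding c_def
        using le_of_int_ceiling[of "u - s0 q"] ceiling_correct[of "u - s0 q"] by linarith+
      show ?thesis
      proof (cases "s0 q + of_int c \<le> T")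
        case True
        then show ?thesis using c1 uT by (intro that[of c]) auto
      next
        case False
        then show ?thesis using c1 uT T1 by (intro that[of "c - 1"]) auto
      qed
    qed
    define p' where "p' = q + (s0 q + of_int j) *\<^sub>R p"
    have "(s0 q + of_int j)\<^sup>2 \<le> T\<^sup>2" using sj(1) T1 by (simp add: abs_le_square_iff[symmetric])
    then have ineq: "(s0 q + of_int j)\<^sup>2 * (norm p)\<^sup>2 \<le> T\<^sup>2 * (norm p)\<^sup>2" by (rule mult_right_mono) simp
    have eq: "(norm p')\<^sup>2 = (norm q)\<^sup>2 + (s0 q + of_int j)\<^sup>2 * (norm p)\<^sup>2" unfolding p'_def by (rule normq[OF q1])
    have sq: "(norm p')\<^sup>2 \<le> R\<^sup>2" by (rule arith1[OF eq Qn[OF hq] ineq T2])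
    have "norm p' \<le> R" by (rule power2_le_imp_le[OF sq]) (use assms(2) in simp)
    moreover have "p' \<in> dual_lattice L" unfolding p'_def by (rule shift[OF q1 q2])
    moreover have "0 < norm p'" unfolding p'_def by (rule pnz[OF hq])
    ultimately have "p' \<in> dual_R L R" unfolding dual_R_def by simp
    then have "a \<le> \<bar>p' \<bullet> \<Omega>\<bar>" by (rule alow)
    also have "p' \<bullet> \<Omega> = a * (s0 q + of_int j - u)" unfolding p'_def using au
      by (simp add: inner_add_left algebra_simps a_def)
    also have "\<bar>a * (s0 q + of_int j - u)\<bar> < a" using sj(2) apos by (simp add: abs_mult)
    finally show False by simp
  qed
  have keyB: "\<exists>p''\<in>dual_R L (sqrt 7 * R / 2). \<bar>p'' \<bullet> \<Omega>\<bar> \<le> \<bar>q \<bullet> \<Omega>\<bar>" if hq: "q \<in> Q" for q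
  proof -
    have q1: "p \<bullet> q = 0" and q2: "\<forall>x\<in>L \<inter> {x. p \<bullet> x = 0}. q \<bullet> x \<in> \<int>" using hq unfolding Q_def by auto
    define u where "u = - (q \<bullet> \<Omega>) / a"
    have au: "q \<bullet> \<Omega> = - a * u" unfolding u_def using apos by simp
    have "a * T \<le> a * \<bar>u\<bar>" using keyA[OF hq] au apos by (simp add: abs_mult)
    then have uT: "T \<le> \<bar>u\<bar>" using apos by simp
    obtain j :: int where sj: "\<bar>s0 q + of_int j\<bar> \<le> 1" "\<bar>s0 q + of_int j - u\<bar> \<le> \<bar>u\<bar>"
    proof -
      define c where "c = \<lceil>- s0 q\<rceil>"
      have c1: "0 \<le> s0 q + of_int c" "s0 q + of_int c < 1" unfolding c_def
        using le_of_int_ceiling[of "- s0 q"] ceiling_correct[of "- s0 q"] by linarith+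
      show ?thesis
      proof (cases "u > 0")
        case True
        then show ?thesis using c1 uT T1 by (intro that[of c]) auto
      next
        case False
        then show ?thesis using c1 uT T1 by (intro that[of "c - 1"]) auto
      qed
    qed
    define p' where "p' = q + (s0 q + of_int j) *\<^sub>R p"
    have "(s0 q + of_int j)\<^sup>2 \<le> 1" using sj(1) abs_le_square_iff[of "s0 q + of_int j" 1] by simp
    then have ineq: "(s0 q + of_int j)\<^sup>2 * (norm p)\<^sup>2 \<le> 1 * (norm p)\<^sup>2" by (rule mult_right_mono) simp
    have pR: "(norm p)\<^sup>2 \<le> R\<^sup>2" using pn by (intro power_mono) auto
    have eq: "(norm p')\<^sup>2 = (norm q)\<^sup>2 + (s0 q + of_int j)\<^sup>2 * (norm p)\<^sup>2" unfolding p'_def by (rule normq[OF q1])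
    have sq: "(norm p')\<^sup>2 \<le> (sqrt 7 * R / 2)\<^sup>2" by (rule arith2[OF eq Qn[OF hq] ineq pR])
    have "norm p' \<le> sqrt 7 * R / 2" by (rule power2_le_imp_le[OF sq]) (use assms(2) in simp)
    moreover have "p' \<in> dual_lattice L" unfolding p'_def by (rule shift[OF q1 q2])
    moreover have "0 < norm p'" unfolding p'_def by (rule pnz[OF hq])
    ultimately have "p' \<in> dual_R L (sqrt 7 * R / 2)" unfolding dual_R_def by simp
    moreover have "p' \<bullet> \<Omega> = a * (s0 q + of_int j - u)" unfolding p'_def using au
      by (simp add: inner_add_left algebra_simps a_def)
    moreover have "\<bar>a * (s0 q + of_int j - u)\<bar> \<le> \<bar>q \<bullet> \<Omega>\<bar>" using sj(2) apos au
      by (simp add: abs_mult mult_left_mono)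
    ultimately show ?thesis by (intro bexI[of _ p']) auto
  qed
  define \<beta> where "\<beta> = (INF q\<in>Q. ereal \<bar>q \<bullet> \<Omega>\<bar>)"
  have bge: "ereal (a * T) \<le> \<beta>" unfolding \<beta>_def by (rule INF_greatest) (simp add: keyA)
  have c3: "alpha L \<Omega> (sqrt 7 * R / 2) \<le> \<beta>" unfolding \<beta>_def
  proof (rule INF_greatest)
    fix q assume "q \<in> Q"
    then obtain p'' where hp: "p'' \<in> dual_R L (sqrt 7 * R / 2)" "\<bar>p'' \<bullet> \<Omega>\<bar> \<le> \<bar>q \<bullet> \<Omega>\<bar>" using keyB by blast
    have "alpha L \<Omega> (sqrt 7 * R / 2) \<le> ereal \<bar>p'' \<bullet> \<Omega>\<bar>" unfolding alpha_def using hp(1) by (rule INF_lower)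
    also have "\<dots> \<le> ereal \<bar>q \<bullet> \<Omega>\<bar>" using hp(2) by simp
    finally show "alpha L \<Omega> (sqrt 7 * R / 2) \<le> ereal \<bar>q \<bullet> \<Omega>\<bar>" .
  qed
  have aT: "a \<le> 2 * (a * T)" using T1 apos by (simp add: algebra_simps)
  have c2: "alpha L \<Omega> R \<le> 2 * \<beta>"
  proof -
    have "ereal a \<le> ereal (2 * (a * T))" using aT by simp
    also have "\<dots> = 2 * ereal (a * T)" by simp
    also have "\<dots> \<le> 2 * \<beta>" using bge by (rule ereal_mult_left_mono) simp
    finally show ?thesis using aeq by simp
  qed
  have c1: "alpha L \<Omega> R / (\<beta> * ereal (norm p)) \<le> ereal (2 / R)"
  proof (cases \<beta>)
    case (real b)
    have bpos: "a * T \<le> b" using bge real by simp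
    have "0 < a * T" using apos T1 by simp
    then have b0: "b > 0" using bpos by linarith
    have "a / (b * norm p) \<le> 2 / R"
    proof -
      have "a * R \<le> 2 * (b * norm p)" using bpos pn unfolding T_def by (simp add: field_simps)
      then show ?thesis using b0 pn assms(2) by (simp add: field_simps)
    qed
    then show ?thesis using aeq real b0 pn by simp
  next
    case PInf
    then show ?thesis using aeq pn assms(2) by simp
  next
    case MInf
    then show ?thesis using bge by simp
  qed
  show ?thesis using lat c1 c2 c3 unfolding Let_def \<beta>_def Q_def by blast
qed

end
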